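(* Assume $\operatorname{add}(\mathcal N)=\operatorname{cov}(\mathcal N)$. Then $\mathcal{ANM}_{\operatorname{add}(\mathcal N)}\setminus\mathcal{ND}_{\operatorname{add}(\mathcal N)}$ is strongly $\mathfrak c$-algebrable in $\left(\mathbb R^{[0,1]}\right)^{\operatorname{add}(\mathcal N)}$.
   Context: For a regular infinite cardinal $\kappa$, a $\kappa$-sequence $(x_\alpha)_{\alpha<\kappa}$ converges to $x$ if for every neighbourhood $U$ of $x$ there is $\alpha_0<\kappa$ with $x_\alpha\in U$ for all $\alpha_0<\alpha<\kappa$; $\left(\mathbb R^{[0,1]}\right)^{\kappa}$ is the commutative real algebra of $\kappa$-sequences of functions $[0,1]\to\mathbb R$ with indexwise operations. $\lambda$ is Lebesgue measure, $\mathcal N$ the null subsets of $[0,1]$; $\operatorname{add}(\mathcal N)$ the least cardinality of a family of null sets with non-null union, $\operatorname{cov}(\mathcal N)$ the least cardinality of a family of null sets covering $[0,1]$. $\mathcal{ANM}_{\kappa}$: $\kappa$-sequences of Lebesgue measurable $f_\alpha:[0,1]\to\mathbb R$ converging a.e. to a measurable $f$ but not converging in measure to $f$. $\mathcal{ND}_{\kappa}$: $\kappa$-sequences of Lebesgue measurable $f_\alpha:[0,1]\to\mathbb R$ dominated a.e. by a common integrable $g$, converging a.e. to an integrable $f$, with $\int|f_\alpha-f|\,d\lambda\not\to0$. $S$ is strongly $\mu$-algebrable if there is a set $X$ of $\mu$ algebraically independent elements such that every nonzero element of the (non-unital) algebra generated by $X$ belongs to $S$. *)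

theory Defs
  imports "HOL-Analysis.Analysis" "HOL-Library.Equipollence"
begin

definition nullI :: "real set set" where
  "nullI = {A. A \<subseteq> {0..1} \<and> A \<in> null_sets lebesgue}"

definition card_is_addN :: "'i set \<Rightarrow> bool" where
  "card_is_addN I \<longleftrightarrow>
     (\<exists>F. F \<subseteq> nullI \<and> \<Union>F \<notin> nullI \<and> F \<approx> I) \<and>
     (\<forall>F. F \<subseteq> nullI \<and> \<Union>F \<notin> nullI \<longrightarrow> I \<lesssim> F)"

definition card_is_covN :: "'i set \<Rightarrow> bool" where
  "card_is_covN I \<longleftrightarrow>
     (\<exists>F. F \<subseteq> nullI \<and> {0..1} \<subseteq> \<Union>F \<and> F \<approx> I) \<and>
     (\<forall>F. F \<subseteq> nullI \<and> {0..1} \<subseteq> \<Union>F \<longrightarrow> I \<lesssim> F)"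

text \<open>A kappa-sequence is indexed by the field of a cardinal well-order r
  (the initial ordinal kappa); x converges to l along r.\<close>
definition kconv :: "'i rel \<Rightarrow> ('i \<Rightarrow> 'b::topological_space) \<Rightarrow> 'b \<Rightarrow> bool" where
  "kconv r x l \<longleftrightarrow>
     (\<forall>U. open U \<and> l \<in> U \<longrightarrow> (\<exists>\<alpha>0. \<forall>\<alpha>. (\<alpha>0, \<alpha>) \<in> r \<and> \<alpha> \<noteq> \<alpha>0 \<longrightarrow> x \<alpha> \<in> U))"

abbreviation I01 :: "real measure" where
  "I01 \<equiv> lebesgue_on {0..1}"

definition conv_in_measure :: "'i rel \<Rightarrow> ('i \<Rightarrow> real \<Rightarrow> real) \<Rightarrow> (real \<Rightarrow> real) \<Rightarrow> bool" where
  "conv_in_measure r F f \<longleftrightarrow>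
     (\<forall>\<epsilon>>0. kconv r (\<lambda>\<alpha>. measure I01 {t \<in> {0..1}. \<epsilon> \<le> \<bar>F \<alpha> t - f t\<bar>}) 0)"

definition ANM :: "'i rel \<Rightarrow> ('i \<Rightarrow> real \<Rightarrow> real) set" where
  "ANM r = {F. (\<forall>\<alpha>. F \<alpha> \<in> borel_measurable I01) \<and>
      (\<exists>f. f \<in> borel_measurable I01 \<and>
           (AE t in I01. kconv r (\<lambda>\<alpha>. F \<alpha> t) (f t)) \<and>
           \<not> conv_in_measure r F f)}"

definition ND :: "'i rel \<Rightarrow> ('i \<Rightarrow> real \<Rightarrow> real) set" where
  "ND r = {F. (\<forall>\<alpha>. F \<alpha> \<in> borel_measurable I01) \<and>
      (\<exists>g. integrable I01 g \<and> (\<forall>\<alpha>. AE t in I01. \<bar>F \<alpha> t\<bar> \<le> g t)) \<and>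
      (\<exists>f. integrable I01 f \<and>
           (AE t in I01. kconv r (\<lambda>\<alpha>. F \<alpha> t) (f t)) \<and>
           \<not> kconv r (\<lambda>\<alpha>. integral\<^sup>L I01 (\<lambda>t. \<bar>F \<alpha> t - f t\<bar>)) 0)}"

text \<open>Elements of (R^[0,1])^kappa: kappa-sequences of functions, represented as
  functions on the reals vanishing outside [0,1] (an isomorphic copy; the
  operations are indexwise and pointwise).\<close>
definition seq_algebra :: "('i \<Rightarrow> real \<Rightarrow> real) set" where
  "seq_algebra = {F. \<forall>\<alpha> t. t \<notin> {0..1} \<longrightarrow> F \<alpha> t = 0}"

definition mono_exps :: "nat \<Rightarrow> (nat \<Rightarrow> nat) set" where
  "mono_exps n = {e. (\<forall>i. n \<le> i \<longrightarrow> e i = 0) \<and> (\<exists>i<n. 0 < e i)}"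

definition poly_eval :: "(nat \<Rightarrow> nat) set \<Rightarrow> ((nat \<Rightarrow> nat) \<Rightarrow> real) \<Rightarrow> nat
     \<Rightarrow> (nat \<Rightarrow> 'i \<Rightarrow> real \<Rightarrow> real) \<Rightarrow> 'i \<Rightarrow> real \<Rightarrow> real" where
  "poly_eval E c n x = (\<lambda>\<alpha> t. \<Sum>e\<in>E. c e * (\<Prod>i<n. x i \<alpha> t ^ e i))"

definition alg_indep :: "('i \<Rightarrow> real \<Rightarrow> real) set \<Rightarrow> bool" where
  "alg_indep X \<longleftrightarrow>
     (\<forall>n x E c. (\<forall>i<n. x i \<in> X) \<and> inj_on x {..<n} \<and> finite E \<and> E \<noteq> {} \<and>
        E \<subseteq> mono_exps n \<and> (\<forall>e\<in>E. c e \<noteq> 0)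
        \<longrightarrow> poly_eval E c n x \<noteq> (\<lambda>\<alpha> t. 0))"

text \<open>The (non-unital) real algebra generated by X.\<close>
definition gen_alg :: "('i \<Rightarrow> real \<Rightarrow> real) set \<Rightarrow> ('i \<Rightarrow> real \<Rightarrow> real) set" where
  "gen_alg X = {poly_eval E c n x | n x E c.
      (\<forall>i<n. x i \<in> X) \<and> finite E \<and> E \<subseteq> mono_exps n}"

text \<open>S is strongly mu-algebrable (mu = cardinality of the set M) in the algebra A.\<close>
definition strongly_algebrable ::
    "('i \<Rightarrow> real \<Rightarrow> real) set \<Rightarrow> 'm set \<Rightarrow> ('i \<Rightarrow> real \<Rightarrow> real) set \<Rightarrow> bool" where
  "strongly_algebrable A M S \<longleftrightarrow>
     (\<exists>X. X \<subseteq> A \<and> X \<approx> M \<and> alg_indep X \<and>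
          (\<forall>y\<in>gen_alg X. y \<noteq> (\<lambda>\<alpha> t. 0) \<longrightarrow> y \<in> S))"

end

theory Submission
  imports Defs "HOL-Computational_Algebra.Fundamental_Theorem_Algebra"
begin
unbundle cardinal_syntax




lemma under_not_big:
  fixes r :: "'i rel"
  assumes co: "card_order r" and inf: "infinite (UNIV::'i set)"
  shows "\<not> (UNIV::'i set) \<lesssim> {b. (b,a) \<in> r}"
proof
  assume H: "(UNIV::'i set) \<lesssim> {b. (b,a) \<in> r}"
  have F: "Field r = UNIV" and C: "Card_order r"
    using card_order_on_Card_order[OF co] by auto
  have "{b. (b,a) \<in> r} \<subseteq> insert a (underS r a)"
    by (auto simp: underS_def)
  hence H2: "(UNIV::'i set) \<lesssim> insert a (underS r a)"
    using lepoll_trans[OF H subset_imp_lepoll] by simp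
  have H3: "(UNIV::'i set) \<lesssim> underS r a"
  proof (cases "finite (underS r a)")
    case True
    hence "finite (insert a (underS r a))" by simp
    with H2 inf show ?thesis by (meson infinite_le_lepoll lepoll_trans)
  next
    case False
    then show ?thesis using lepoll_trans[OF H2 infinite_insert_lepoll] by simp
  qed
  hence "|UNIV::'i set| \<le>o |underS r a|"
    unfolding lepoll_def card_of_ordLeq[symmetric] by blast
  moreover have "|underS r a| <o r" using card_of_underS[OF C] F by simp
  moreover have "r =o |UNIV::'i set|" using card_of_unique[OF co] .
  ultimately have "|UNIV::'i set| <o |UNIV::'i set|"
    using ordLeq_ordLess_trans ordLess_ordIso_trans by blast
  thus False using ordLess_irreflexive by blast
qed




lemma poly_unbounded:
  fixes p :: "real poly"
  assumes "poly p 1 \<noteq> 0" "coeff p 0 = 0"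
  shows "\<exists>k::nat. M < \<bar>poly p (real k)\<bar>"
proof -
  obtain a q where p: "p = pCons a q" by (cases p)
  have a: "a = 0" using assms(2) p by simp
  have q: "q \<noteq> 0" using assms(1) p a by auto
  obtain R where R: "\<And>z::real. R \<le> norm z \<Longrightarrow> M + 1 \<le> norm (poly (pCons a q) z)"
    using poly_infinity[OF q, of "M+1" a] by blast
  define k where "k = nat \<lceil>\<bar>R\<bar>\<rceil>"
  have "R \<le> norm (real k)" unfolding k_def by (simp; linarith)
  hence "M + 1 \<le> norm (poly p (real k))" using R p by blast
  thus ?thesis by (intro exI[of _ k]) (simp; linarith)
qed

lemma base_unique:
  fixes D :: nat
  shows "(\<forall>p<M. a p < D \<and> b p < D) \<Longrightarrow> (\<Sum>p<M. a p * D^p) = (\<Sum>p<M. b p * D^p) \<Longrightarrow> (\<forall>p<M. a p = b p)"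
proof (induction M arbitrary: a b)
  case 0
  then show ?case by simp
next
  case (Suc M)
  have Dpos: "0 < D" using Suc.prems(1) by auto
  have ex: "\<And>f. (\<Sum>p<Suc M. f p * D^p) = f 0 + D * (\<Sum>p<M. f (Suc p) * D^p)"
    unfolding sum.lessThan_Suc_shift by (simp add: sum_distrib_left ac_simps)
  have eq: "a 0 + D * (\<Sum>p<M. a (Suc p) * D^p) = b 0 + D * (\<Sum>p<M. b (Suc p) * D^p)"
    using Suc.prems(2) ex by metis
  have a0: "a 0 < D" "b 0 < D" using Suc.prems(1) by auto
  from arg_cong[OF eq, of "\<lambda>x. x mod D"] have h0: "a 0 = b 0" using a0 by simp
  from arg_cong[OF eq, of "\<lambda>x. x div D"] have "(\<Sum>p<M. a (Suc p) * D^p) = (\<Sum>p<M. b (Suc p) * D^p)"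
    using a0 Dpos by simp
  with Suc.IH[of "\<lambda>p. a (Suc p)" "\<lambda>p. b (Suc p)"] Suc.prems(1)
  have "\<forall>p<M. a (Suc p) = b (Suc p)" by auto
  with h0 show ?case by (auto simp: less_Suc_eq_0_disj)
qed

lemma code_reindex:
  fixes j :: "nat \<Rightarrow> nat" and e :: "nat \<Rightarrow> nat" and D :: nat
  assumes inj: "inj_on j {..<n}" and M: "\<forall>i<n. j i < M"
  shows "(\<Sum>i<n. e i * D ^ j i) =
    (\<Sum>p<M. (if p \<in> j ` {..<n} then e (the_inv_into {..<n} j p) else 0) * D^p)"
proof -
  let ?d = "\<lambda>p. (if p \<in> j ` {..<n} then e (the_inv_into {..<n} j p) else 0)"
  have "(\<Sum>p<M. ?d p * D^p) = (\<Sum>p\<in>j ` {..<n}. ?d p * D^p)"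
    by (rule sum.mono_neutral_right) (use M in \<open>auto simp del: mult_is_0\<close>)
  also have "\<dots> = (\<Sum>i<n. ?d (j i) * D^(j i))"
    by (rule sum.reindex[OF inj, unfolded comp_def])
  also have "\<dots> = (\<Sum>i<n. e i * D ^ j i)"
    by (rule sum.cong) (auto simp: the_inv_into_f_f[OF inj])
  finally show ?thesis by simp
qed

lemma code_inj:
  fixes j :: "nat \<Rightarrow> nat"
  assumes inj: "inj_on j {..<n}"
    and E: "E \<subseteq> mono_exps n"
    and D: "\<forall>e\<in>E. \<forall>i<n. e i < D" and Dpos: "0 < D"
  shows "inj_on (\<lambda>e. \<Sum>i<n. e i * D ^ j i) E"
proof
  fix e e' assume e: "e \<in> E" and e': "e' \<in> E" and eq: "(\<Sum>i<n. e i * D ^ j i) = (\<Sum>i<n. e' i * D ^ j i)"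
  define M where "M = Suc (\<Sum>i<n. j i)"
  have M: "\<forall>i<n. j i < M" unfolding M_def
    by (auto intro!: le_imp_less_Suc member_le_sum)
  let ?d = "\<lambda>e p. (if p \<in> j ` {..<n} then e (the_inv_into {..<n} j p) else 0)"
  have eq2: "(\<Sum>p<M. ?d e p * D^p) = (\<Sum>p<M. ?d e' p * D^p)"
    using eq code_reindex[OF inj M, of e D] code_reindex[OF inj M, of e' D] by simp
  have bd: "\<forall>p<M. ?d e p < D \<and> ?d e' p < D"
  proof (intro allI impI conjI)
    fix p assume "p < M"
    show "?d e p < D" using D e Dpos by (auto simp: the_inv_into_f_f[OF inj])
    show "?d e' p < D" using D e' Dpos by (auto simp: the_inv_into_f_f[OF inj])
  qed
  have all: "\<forall>p<M. ?d e p = ?d e' p" using base_unique[OF bd eq2] .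
  show "e = e'"
  proof
    fix i show "e i = e' i"
    proof (cases "i < n")
      case True
      have "?d e (j i) = ?d e' (j i)" using all M True by auto
      thus ?thesis using True by (simp add: the_inv_into_f_f[OF inj])
    next
      case False
      have "\<forall>i\<ge>n. e i = 0" "\<forall>i\<ge>n. e' i = 0" using e e' E by (auto simp: mono_exps_def)
      thus ?thesis using False by simp
    qed
  qed
qed




definition amap :: "nat \<times> nat \<times> nat \<times> nat \<Rightarrow> real \<Rightarrow> real" where
  "amap q s = (case q of (l,N,m,D) \<Rightarrow> real l * real N ^ (D ^ nat \<lfloor>real m * exp s\<rfloor>))"

definition Gf :: "(nat\<Rightarrow>nat) set \<Rightarrow> ((nat\<Rightarrow>nat)\<Rightarrow>real) \<Rightarrow> nat \<Rightarrow> (nat \<Rightarrow> real) \<Rightarrow> nat\<times>nat\<times>nat\<times>nat \<Rightarrow> real" where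
  "Gf E c n \<sigma> q = (\<Sum>e\<in>E. c e * (\<Prod>i<n. amap q (\<sigma> i) ^ e i))"

lemma Gf_scale:
  "Gf E c n \<sigma> (k*l,N,m,D) =
   poly (\<Sum>e\<in>E. monom (c e * (\<Prod>i<n. amap (l,N,m,D) (\<sigma> i) ^ e i)) (\<Sum>i<n. e i)) (real k)"
proof -
  have "\<And>e. (\<Prod>i<n. amap (k*l,N,m,D) (\<sigma> i) ^ e i) = real k ^ (\<Sum>i<n. e i) * (\<Prod>i<n. amap (l,N,m,D) (\<sigma> i) ^ e i)"
    by (simp add: amap_def power_mult_distrib prod.distrib power_sum)
  thus ?thesis by (simp add: Gf_def poly_sum poly_monom ac_simps)
qed

lemma Gf_unbounded:
  assumes E: "E \<subseteq> mono_exps n" and nz: "Gf E c n \<sigma> (l,N,m,D) \<noteq> 0"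
  shows "\<exists>k::nat. M < \<bar>Gf E c n \<sigma> (k*l,N,m,D)\<bar>"
proof -
  let ?p = "\<Sum>e\<in>E. monom (c e * (\<Prod>i<n. amap (l,N,m,D) (\<sigma> i) ^ e i)) (\<Sum>i<n. e i)"
  have "poly ?p 1 \<noteq> 0" using nz Gf_scale[of E c n \<sigma> 1 l N m D] by simp
  moreover have "coeff ?p 0 = 0"
  proof -
    have "coeff (monom (c e * (\<Prod>i<n. amap (l,N,m,D) (\<sigma> i) ^ e i)) (\<Sum>i<n. e i)) 0 = 0"
      if e: "e \<in> E" for e
    proof -
      obtain a where a: "a < n" "0 < e a" using E e by (auto simp: mono_exps_def subset_iff)
      have "e a \<le> (\<Sum>i<n. e i)" using a by (intro member_le_sum) auto
      hence ne: "\<not> (\<Sum>i<n. e i) = 0" using a by linarith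
      show ?thesis by (simp only: coeff_monom if_not_P[OF ne])
    qed
    thus ?thesis by (simp add: coeff_sum)
  qed
  ultimately obtain k::nat where "M < \<bar>poly ?p (real k)\<bar>" using poly_unbounded by blast
  hence "M < \<bar>Gf E c n \<sigma> (k*l,N,m,D)\<bar>" by (simp only: Gf_scale)
  thus ?thesis by blast
qed

lemma floor_sep:
  fixes u :: "nat \<Rightarrow> real"
  assumes inj: "inj_on u {..<n}" and pos: "\<forall>i<n. 0 < u i"
  shows "\<exists>m::nat. inj_on (\<lambda>i. nat \<lfloor>real m * u i\<rfloor>) {..<n}"
proof -
  define f where "f = (\<lambda>(i,i'). nat \<lceil>1 / \<bar>u i - u i'\<bar>\<rceil> + 1)"
  define m where "m = (\<Sum>pr\<in>{..<n}\<times>{..<n}. f pr)"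
  have le: "\<And>i i'. i < n \<Longrightarrow> i' < n \<Longrightarrow> f (i,i') \<le> m"
    unfolding m_def by (rule member_le_sum) auto
  show ?thesis
  proof (intro exI[of _ m] inj_onI)
    fix i i' assume i: "i \<in> {..<n}" and i': "i' \<in> {..<n}" and eq: "nat \<lfloor>real m * u i\<rfloor> = nat \<lfloor>real m * u i'\<rfloor>"
    show "i = i'"
    proof (rule ccontr)
      assume ne: "i \<noteq> i'"
      define d where "d = \<bar>u i - u i'\<bar>"
      have dpos: "0 < d" using inj i i' ne unfolding d_def by (auto dest: inj_onD)
      have "real (f (i,i')) \<le> real m" using le i i' by auto
      moreover have "real (f (i,i')) \<ge> 1/d + 1" unfolding f_def d_def by simp
      ultimately have "1/d + 1 \<le> real m" by linarith
      hence "(1/d + 1) * d \<le> real m * d" using dpos by (intro mult_right_mono) auto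
      moreover have "(1/d + 1) * d = 1 + d" using dpos by (simp add: field_simps)
      ultimately have big: "1 < real m * d" using dpos by linarith
      have "0 \<le> real m * u i" "0 \<le> real m * u i'" using pos i i' by auto
      hence "0 \<le> \<lfloor>real m * u i\<rfloor>" "0 \<le> \<lfloor>real m * u i'\<rfloor>" by auto
      hence "\<lfloor>real m * u i\<rfloor> = \<lfloor>real m * u i'\<rfloor>" using eq by (simp add: eq_nat_nat_iff)
      hence "\<bar>real m * u i - real m * u i'\<bar> < 1" by linarith
      moreover have "\<bar>real m * u i - real m * u i'\<bar> = real m * d"
        unfolding d_def by (simp add: abs_mult right_diff_distrib[symmetric])
      ultimately show False using big by linarith
    qed
  qed
qed

lemma Gf_nonzero:
  assumes inj: "inj_on \<sigma> {..<n}" and fin: "finite E" and ne: "E \<noteq> {}"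
    and E: "E \<subseteq> mono_exps n" and c: "\<forall>e\<in>E. c e \<noteq> 0"
  shows "\<exists>q. Gf E c n \<sigma> q \<noteq> 0"
proof -
  have "inj_on (\<lambda>i. exp (\<sigma> i)) {..<n}" using inj by (auto simp: inj_on_def)
  then obtain m::nat where m: "inj_on (\<lambda>i. nat \<lfloor>real m * exp (\<sigma> i)\<rfloor>) {..<n}"
    using floor_sep[of "\<lambda>i. exp (\<sigma> i)" n] by auto
  define j where "j = (\<lambda>i. nat \<lfloor>real m * exp (\<sigma> i)\<rfloor>)"
  define D where "D = Suc (\<Sum>e\<in>E. \<Sum>i<n. e i)"
  have Dbd: "\<forall>e\<in>E. \<forall>i<n. e i < D"
  proof (intro ballI allI impI)
    fix e i assume e: "e \<in> E" and i: "i < n"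
    have "e i \<le> (\<Sum>i<n. e i)" using i by (intro member_le_sum) auto
    also have "\<dots> \<le> (\<Sum>e\<in>E. \<Sum>i<n. e i)" using e fin by (intro member_le_sum) auto
    finally show "e i < D" unfolding D_def by simp
  qed
  define code where "code = (\<lambda>e. \<Sum>i<n. e i * D ^ j i)"
  have cinj: "inj_on code E" unfolding code_def
    using code_inj[OF m[folded j_def] E Dbd] D_def by simp
  define p where "p = (\<Sum>e\<in>E. monom (c e) (code e))"
  obtain e0 where e0: "e0 \<in> E" using ne by auto
  have "coeff p (code e0) = (\<Sum>e\<in>E. if code e = code e0 then c e else 0)"
    unfolding p_def by (simp add: coeff_sum coeff_monom)
  also have "\<dots> = (\<Sum>e\<in>{e0}. c e)"
    by (rule sum.mono_neutral_cong_right) (use fin e0 cinj in \<open>auto dest: inj_onD\<close>)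
  finally have "coeff p (code e0) \<noteq> 0" using c e0 by simp
  hence pnz: "p \<noteq> 0" by auto
  have "finite {x. poly p x = 0}" using poly_roots_finite[OF pnz] .
  moreover have "infinite (range (real :: nat \<Rightarrow> real))"
    using range_inj_infinite inj_of_nat by blast
  ultimately obtain N::nat where N: "poly p (real N) \<noteq> 0"
    by (metis (mono_tags, lifting) finite_subset image_subset_iff mem_Collect_eq)
  have "Gf E c n \<sigma> (1,N,m,D) = poly p (real N)"
  proof -
    have "\<And>e. (\<Prod>i<n. amap (1,N,m,D) (\<sigma> i) ^ e i) = real N ^ code e"
      by (simp add: amap_def code_def j_def power_sum power_mult[symmetric] mult.commute)
    thus ?thesis by (simp add: Gf_def p_def poly_sum poly_monom)
  qed
  thus ?thesis using N by metis
qed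




lemma I01_facts:
  assumes "N \<in> null_sets lebesgue"
  shows "AE t in I01. t \<notin> N"
    and "{0..1} - N \<in> sets I01"
    and "measure I01 ({0..1::real} - N) = 1"
    and "\<exists>t. t \<in> {0..1::real} - N"
proof -
  have S: "{0..1::real} \<in> sets lebesgue" by simp
  have "N \<inter> {0..1} \<in> null_sets lebesgue" by (rule null_sets_subset[OF assms]) (use assms in auto)
  hence "N \<inter> {0..1} \<in> null_sets I01" using null_sets_restrict_space[OF S] by simp
  from AE_not_in[OF this] show "AE t in I01. t \<notin> N"
    by (rule lebesgue_on_mono) auto
  have D: "{0..1} - N \<in> sets lebesgue" using S assms by auto
  thus "{0..1} - N \<in> sets I01" using sets_restrict_space_iff[of "{0..1::real}" "lebesgue::real measure"] S by auto
  have "measure I01 ({0..1::real} - N) = measure lebesgue ({0..1} - N)"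
    by (rule measure_restrict_space) auto
  also have "\<dots> = measure lebesgue {0..1::real}" using measure_Diff_null_set[OF S assms] .
  also have "\<dots> = 1" by simp
  finally show m: "measure I01 ({0..1::real} - N) = 1" .
  show "\<exists>t. t \<in> {0..1::real} - N"
  proof (rule ccontr)
    assume "\<not> ?thesis"
    hence "{0..1::real} - N = {}" by auto
    with m show False by simp
  qed
qed

lemma ifS_meas:
  assumes "N \<in> null_sets lebesgue"
  shows "(\<lambda>t. if t \<in> {0..1} - N then C else 0) \<in> borel_measurable I01"
proof -
  have "({0..1} - N) \<inter> space I01 = {0..1} - N" by auto
  hence "({0..1} - N) \<inter> space I01 \<in> sets I01" using I01_facts(2)[OF assms] by simp
  thus ?thesis by (intro measurable_If_set) auto
qed




locale constr =
  fixes r :: "'i rel" and phi :: "'i \<Rightarrow> nat\<times>nat\<times>nat\<times>nat" and A :: "'i \<Rightarrow> real set"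
  assumes cof: "\<And>q a0. \<exists>a. (a0,a) \<in> r \<and> a \<noteq> a0 \<and> phi a = q"
    and Anull: "\<And>a. A a \<in> null_sets lebesgue"
    and cover: "\<And>t. t \<in> {0..1} \<Longrightarrow> \<exists>b. \<forall>a. (b,a) \<in> r \<longrightarrow> t \<in> A a"
begin

definition xs :: "real \<Rightarrow> 'i \<Rightarrow> real \<Rightarrow> real" where
  "xs s = (\<lambda>a t. if t \<in> {0..1} - A a then amap (phi a) s else 0)"

lemma pe:
  assumes E: "E \<subseteq> mono_exps n"
  shows "poly_eval E c n (\<lambda>i. xs (\<sigma> i)) a t = (if t \<in> {0..1} - A a then Gf E c n \<sigma> (phi a) else 0)"
proof (cases "t \<in> {0..1} - A a")
  case True
  then show ?thesis by (simp add: poly_eval_def xs_def Gf_def)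
next
  case False
  have "\<And>e. e \<in> E \<Longrightarrow> (\<Prod>i<n. xs (\<sigma> i) a t ^ e i) = 0"
  proof -
    fix e assume "e \<in> E"
    then obtain i where i: "i < n" "0 < e i" using E by (auto simp: mono_exps_def subset_iff)
    show "(\<Prod>i<n. xs (\<sigma> i) a t ^ e i) = 0"
      by (rule prod_zero) (use i False in \<open>auto simp: xs_def\<close>)
  qed
  hence Z: "\<And>e. e \<in> E \<Longrightarrow> c e * (\<Prod>i<n. xs (\<sigma> i) a t ^ e i) = 0" by simp
  have "poly_eval E c n (\<lambda>i. xs (\<sigma> i)) a t = (\<Sum>e\<in>E. c e * (\<Prod>i<n. xs (\<sigma> i) a t ^ e i))"
    by (simp add: poly_eval_def)
  also have "\<dots> = 0" using Z by (intro sum.neutral) blast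
  finally show ?thesis by (simp only: if_not_P[OF False])
qed

lemma main_member:
  assumes E: "E \<subseteq> mono_exps n" and nz: "poly_eval E c n (\<lambda>i. xs (\<sigma> i)) \<noteq> (\<lambda>a t. 0)"
  shows "poly_eval E c n (\<lambda>i. xs (\<sigma> i)) \<in> ANM r - ND r"
proof -
  let ?y = "poly_eval E c n (\<lambda>i. xs (\<sigma> i))"
  let ?G = "\<lambda>a. Gf E c n \<sigma> (phi a)"
  have y: "\<And>a t. ?y a t = (if t \<in> {0..1} - A a then ?G a else 0)" using pe[OF E] by simp
  have "\<exists>a t. ?y a t \<noteq> 0"
  proof (rule ccontr)
    assume "\<not> (\<exists>a t. ?y a t \<noteq> 0)"
    hence "?y = (\<lambda>a t. 0)" by (intro ext) simp
    with nz show False by simp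
  qed
  then obtain a0 t0 where "?y a0 t0 \<noteq> 0" by blast
  hence G0: "?G a0 \<noteq> 0" unfolding y by (cases "t0 \<in> {0..1} - A a0") auto
  obtain l N m D where q0: "phi a0 = (l,N,m,D)" by (cases "phi a0") auto
  have big: "\<exists>a. (b,a) \<in> r \<and> a \<noteq> b \<and> M < \<bar>?G a\<bar>" for M b
  proof -
    obtain k::nat where "M < \<bar>Gf E c n \<sigma> (k*l,N,m,D)\<bar>"
      using Gf_unbounded[OF E, of c \<sigma> l N m D M] G0 q0 by auto
    moreover obtain a where "(b,a) \<in> r \<and> a \<noteq> b \<and> phi a = (k*l,N,m,D)" using cof by blast
    ultimately show ?thesis by auto
  qed
  have meas: "\<And>a. ?y a \<in> borel_measurable I01"
  proof -
    fix a
    have "?y a = (\<lambda>t. if t \<in> {0..1} - A a then ?G a else 0)" using y by auto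
    thus "?y a \<in> borel_measurable I01" using ifS_meas[OF Anull] by simp
  qed
  have conv: "AE t in I01. kconv r (\<lambda>a. ?y a t) 0"
  proof (rule AE_I2)
    fix t assume "t \<in> space I01"
    hence "t \<in> {0..1}" by simp
    then obtain b where b: "\<forall>a. (b,a) \<in> r \<longrightarrow> t \<in> A a" using cover by blast
    show "kconv r (\<lambda>a. ?y a t) 0"
      unfolding kconv_def
    proof (intro allI impI)
      fix U :: "real set" assume "open U \<and> 0 \<in> U"
      thus "\<exists>\<alpha>0. \<forall>\<alpha>. (\<alpha>0, \<alpha>) \<in> r \<and> \<alpha> \<noteq> \<alpha>0 \<longrightarrow> ?y \<alpha> t \<in> U"
        using b y by (intro exI[of _ b]) auto
    qed
  qed
  have nconv: "\<not> conv_in_measure r ?y (\<lambda>t. 0)"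
  proof
    assume "conv_in_measure r ?y (\<lambda>t. 0)"
    hence "\<forall>\<epsilon>>0. kconv r (\<lambda>\<alpha>. measure I01 {t \<in> {0..1}. \<epsilon> \<le> \<bar>?y \<alpha> t - 0\<bar>}) 0"
      by (simp only: conv_in_measure_def)
    hence "kconv r (\<lambda>\<alpha>. measure I01 {t \<in> {0..1}. 1 \<le> \<bar>?y \<alpha> t - 0\<bar>}) 0"
      using zero_less_one by blast
    hence K: "\<forall>U. open U \<and> (0::real) \<in> U \<longrightarrow> (\<exists>\<alpha>0. \<forall>\<alpha>. (\<alpha>0, \<alpha>) \<in> r \<and> \<alpha> \<noteq> \<alpha>0 \<longrightarrow>
        measure I01 {t \<in> {0..1}. 1 \<le> \<bar>?y \<alpha> t - 0\<bar>} \<in> U)"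
      by (simp only: kconv_def)
    have "open {-1/2<..<1/2::real} \<and> (0::real) \<in> {-1/2<..<1/2}" by auto
    from mp[OF spec[OF K, of "{-1/2<..<1/2::real}"] this]
    obtain b where b: "\<forall>\<alpha>. (b, \<alpha>) \<in> r \<and> \<alpha> \<noteq> b \<longrightarrow>
        measure I01 {t \<in> {0..1}. 1 \<le> \<bar>?y \<alpha> t - 0\<bar>} \<in> {-1/2<..<1/2::real}" by blast
    obtain a where a: "(b,a) \<in> r" "a \<noteq> b" "1 < \<bar>?G a\<bar>" using big by blast
    have "{t \<in> {0..1}. 1 \<le> \<bar>?y a t - 0\<bar>} = {0..1} - A a"
    proof (rule set_eqI)
      fix t show "t \<in> {t \<in> {0..1}. 1 \<le> \<bar>?y a t - 0\<bar>} \<longleftrightarrow> t \<in> {0..1} - A a"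
        using a(3) by (cases "t \<in> {0..1} - A a") (simp_all only: y if_True if_False, auto)
    qed
    hence "measure I01 {t \<in> {0..1}. 1 \<le> \<bar>?y a t - 0\<bar>} = 1" using I01_facts(3)[OF Anull] by simp
    moreover have "measure I01 {t \<in> {0..1}. 1 \<le> \<bar>?y a t - 0\<bar>} \<in> {-1/2<..<1/2::real}"
      using b a(1,2) by blast
    ultimately show False by simp
  qed
  have ex: "\<exists>f. f \<in> borel_measurable I01 \<and> (AE t in I01. kconv r (\<lambda>\<alpha>. ?y \<alpha> t) (f t)) \<and> \<not> conv_in_measure r ?y f"
    by (rule exI[of _ "\<lambda>t. 0"]) (intro conjI borel_measurable_const conv nconv)
  have ANM: "?y \<in> ANM r"
    unfolding ANM_def mem_Collect_eq using meas ex by (intro conjI allI) assumption+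
  have nND: "?y \<notin> ND r"
  proof
    assume "?y \<in> ND r"
    hence "\<exists>g. integrable I01 g \<and> (\<forall>\<alpha>. AE t in I01. \<bar>?y \<alpha> t\<bar> \<le> g t)"
      by (simp only: ND_def mem_Collect_eq)
    then obtain g where g: "integrable I01 g" and dom: "\<forall>\<alpha>. AE t in I01. \<bar>?y \<alpha> t\<bar> \<le> g t"
      by blast
    obtain a where a: "integral\<^sup>L I01 g < \<bar>?G a\<bar>" using big by blast
    have sp: "AE t in I01. t \<in> {0..1}" by (rule AE_I2) simp
    have "AE t in I01. \<bar>?G a\<bar> \<le> g t"
      using spec[OF dom, of a] I01_facts(1)[OF Anull, of a] sp
    proof eventually_elim
      case (elim t)
      hence "?y a t = ?G a" by (simp only: y) simp
      thus ?case using elim(1) by simp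
    qed
    hence "integral\<^sup>L I01 (\<lambda>t. \<bar>?G a\<bar>) \<le> integral\<^sup>L I01 g"
      by (intro integral_mono_AE g) auto
    moreover have "integral\<^sup>L I01 (\<lambda>t. \<bar>?G a\<bar>) = \<bar>?G a\<bar>"
      using I01_facts(3)[of "{}"] by simp
    ultimately show False using a by linarith
  qed
  show ?thesis using ANM nND by blast
qed

end




context constr begin

lemma xs_inj: "inj xs"
proof
  fix s s' assume eq: "xs s = xs s'"
  show "s = s'"
  proof (rule ccontr)
    assume ne: "s \<noteq> s'"
    define u where "u = (\<lambda>i::nat. if i = 0 then exp s else exp s')"
    have "inj_on u {..<2}" using ne unfolding u_def by (auto simp: inj_on_def)
    moreover have "\<forall>i<2. 0 < u i" unfolding u_def by auto
    ultimately obtain m::nat where m: "inj_on (\<lambda>i. nat \<lfloor>real m * u i\<rfloor>) {..<2}"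
      using floor_sep by blast
    have jne: "nat \<lfloor>real m * exp s\<rfloor> \<noteq> nat \<lfloor>real m * exp s'\<rfloor>"
      using inj_onD[OF m, of 0 1] unfolding u_def by auto
    obtain a where a: "phi a = (1,2,m,2)" using cof by blast
    obtain t where t: "t \<in> {0..1} - A a" using I01_facts(4)[OF Anull] by blast
    have "xs s a t = xs s' a t" using eq by simp
    hence "(2::real) ^ (2 ^ nat \<lfloor>real m * exp s\<rfloor>) = 2 ^ (2 ^ nat \<lfloor>real m * exp s'\<rfloor>)"
      using t a by (simp add: xs_def amap_def)
    hence "(2::nat) ^ nat \<lfloor>real m * exp s\<rfloor> = 2 ^ nat \<lfloor>real m * exp s'\<rfloor>"
      by (simp add: power_inject_exp)
    hence "nat \<lfloor>real m * exp s\<rfloor> = nat \<lfloor>real m * exp s'\<rfloor>"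
      by (simp add: power_inject_exp)
    with jne show False by simp
  qed
qed

lemma pick_sigma:
  assumes "\<forall>i<n. x i \<in> range xs"
  obtains \<sigma> where "\<forall>i<n. x i = xs (\<sigma> i)" "poly_eval E (c::(nat\<Rightarrow>nat)\<Rightarrow>real) n x = poly_eval E c n (\<lambda>i. xs (\<sigma> i))"
proof -
  define \<sigma> where "\<sigma> = (\<lambda>i. SOME s. x i = xs s)"
  have h: "\<forall>i<n. x i = xs (\<sigma> i)"
    using assms unfolding \<sigma>_def by (metis (mono_tags, lifting) rangeE someI)
  have "poly_eval E (c::(nat\<Rightarrow>nat)\<Rightarrow>real) n x = poly_eval E c n (\<lambda>i. xs (\<sigma> i))"
    unfolding poly_eval_def using h by (intro ext sum.cong refl arg_cong2[where f="(*)"] prod.cong) auto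
  with h that show ?thesis by blast
qed

lemma alg: "strongly_algebrable seq_algebra (UNIV::real set) (ANM r - ND r)"
  unfolding strongly_algebrable_def
proof (intro exI[of _ "range xs"] conjI)
  show "range xs \<subseteq> seq_algebra" by (auto simp: seq_algebra_def xs_def)
  show "range xs \<approx> (UNIV::real set)" using inj_on_image_eqpoll_self[OF xs_inj] .
  show "alg_indep (range xs)"
    unfolding alg_indep_def
  proof (intro allI impI)
    fix n :: nat and x :: "nat \<Rightarrow> 'i \<Rightarrow> real \<Rightarrow> real" and E :: "(nat\<Rightarrow>nat) set" and c :: "(nat\<Rightarrow>nat)\<Rightarrow>real"
    assume H: "(\<forall>i<n. x i \<in> range xs) \<and> inj_on x {..<n} \<and> finite E \<and> E \<noteq> {} \<and>
         E \<subseteq> mono_exps n \<and> (\<forall>e\<in>E. c e \<noteq> 0)"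
    obtain \<sigma> where s1: "\<forall>i<n. x i = xs (\<sigma> i)" and s2: "poly_eval E (c::(nat\<Rightarrow>nat)\<Rightarrow>real) n x = poly_eval E c n (\<lambda>i. xs (\<sigma> i))"
      using pick_sigma[of n x E c] H by blast
    have "inj_on \<sigma> {..<n}"
    proof
      fix i j assume "i \<in> {..<n}" "j \<in> {..<n}" "\<sigma> i = \<sigma> j"
      hence "x i = x j" using s1 by auto
      thus "i = j" using H \<open>i \<in> {..<n}\<close> \<open>j \<in> {..<n}\<close> by (auto dest: inj_onD)
    qed
    then obtain q where q: "Gf E c n \<sigma> q \<noteq> 0" using Gf_nonzero H by blast
    obtain a where a: "phi a = q" using cof by blast
    obtain t where t: "t \<in> {0..1} - A a" using I01_facts(4)[OF Anull] by blast
    have "poly_eval E c n x a t \<noteq> 0" using s2 pe[of E n c \<sigma> a t] H t a q by simp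
    thus "poly_eval E c n x \<noteq> (\<lambda>\<alpha> t. 0)" by auto
  qed
  show "\<forall>y\<in>gen_alg (range xs). y \<noteq> (\<lambda>\<alpha> t. 0) \<longrightarrow> y \<in> ANM r - ND r"
  proof (intro ballI impI)
    fix y assume y: "y \<in> gen_alg (range xs)" and nz: "y \<noteq> (\<lambda>\<alpha> t. 0)"
    then obtain n x E c where yd: "y = poly_eval E c n x" and H: "\<forall>i<n. x i \<in> range xs"
      "finite E" "E \<subseteq> mono_exps n"
      unfolding gen_alg_def by blast
    obtain \<sigma> where s2: "poly_eval E (c::(nat\<Rightarrow>nat)\<Rightarrow>real) n x = poly_eval E c n (\<lambda>i. xs (\<sigma> i))"
      using pick_sigma[of n x E c] H by blast
    show "y \<in> ANM r - ND r" using main_member[OF H(3)] nz yd s2 by simp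
  qed
qed

end




theorem mainTheorem12:
  fixes r :: "'i rel"
  assumes "card_order r"
    and "card_is_addN (UNIV :: 'i set)"
    and "card_is_covN (UNIV :: 'i set)"
  shows "strongly_algebrable (seq_algebra :: ('i \<Rightarrow> real \<Rightarrow> real) set) (UNIV :: real set)
           (ANM r - ND r)"
proof -
  note co = assms(1)
  have inf: "infinite (UNIV::'i set)"
  proof
    assume fin: "finite (UNIV::'i set)"
    obtain F0 where F0: "F0 \<subseteq> nullI" "\<Union>F0 \<notin> nullI" "F0 \<approx> (UNIV::'i set)"
      using assms(2) unfolding card_is_addN_def by blast
    have "finite F0" using eqpoll_finite_iff[OF F0(3)] fin by simp
    moreover have "F0 \<subseteq> null_sets lebesgue" using F0(1) by (auto simp: nullI_def)
    ultimately have "\<Union>F0 \<in> null_sets lebesgue" by (rule null_sets.finite_Union)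
    moreover have "\<Union>F0 \<subseteq> {0..1}" using F0(1) by (auto simp: nullI_def)
    ultimately show False using F0(2) by (simp add: nullI_def)
  qed
  have wo: "well_order_on UNIV r" using card_order_on_well_order_on[OF co] .
  hence refl: "\<And>a. (a,a) \<in> r" and tot: "\<And>a b. a \<noteq> b \<Longrightarrow> (a,b) \<in> r \<or> (b,a) \<in> r"
    unfolding well_order_on_def linear_order_on_def partial_order_on_def preorder_on_def
      refl_on_def total_on_def by auto
  let ?Q = "UNIV :: (nat\<times>nat\<times>nat\<times>nat) set"
  have "?Q \<lesssim> (UNIV::nat set)" unfolding lepoll_def using inj_to_nat by blast
  also have "(UNIV::nat set) \<lesssim> (UNIV::'i set)" using inf infinite_le_lepoll by blast
  finally have "?Q \<lesssim> (UNIV::'i set)" .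
  hence "ordLeq3 (card_of ?Q) (card_of (UNIV::'i set))"
    unfolding lepoll_def card_of_ordLeq[symmetric] by blast
  hence "ordIso2 (card_of ((UNIV::'i set) \<times> ?Q)) (card_of (UNIV::'i set))"
    using card_of_Times_infinite[OF inf] by blast
  hence "((UNIV::'i set) \<times> ?Q) \<approx> (UNIV::'i set)" by (simp add: eqpoll_iff_card_of_ordIso)
  then obtain h where h: "bij_betw h ((UNIV::'i set) \<times> ?Q) (UNIV::'i set)"
    unfolding eqpoll_def by blast
  define phi where "phi = (\<lambda>a. snd (inv h a))"
  have hinv: "\<And>p. inv h (h p) = p" using h by (simp add: bij_betw_def)
  have hinj: "inj h" using h by (simp add: bij_betw_def)
  have cof: "\<exists>a. (a0,a) \<in> r \<and> a \<noteq> a0 \<and> phi a = q" for q a0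
  proof (rule ccontr)
    assume nex: "\<not> ?thesis"
    have "(\<lambda>b. h (b,q)) ` UNIV \<subseteq> {b. (b,a0) \<in> r}"
    proof
      fix a assume "a \<in> (\<lambda>b. h (b,q)) ` UNIV"
      then obtain b where a: "a = h (b,q)" by blast
      have pa: "phi a = q" unfolding phi_def a hinv by simp
      show "a \<in> {b. (b,a0) \<in> r}"
      proof (cases "a = a0")
        case True thus ?thesis using refl by simp
      next
        case False thus ?thesis using tot[OF False] nex pa by auto
      qed
    qed
    moreover have "inj (\<lambda>b. h (b,q))" by (rule injI) (metis hinv fst_conv)
    ultimately have "(UNIV::'i set) \<lesssim> {b. (b,a0) \<in> r}" unfolding lepoll_def by blast
    thus False using under_not_big[OF co inf] by blast
  qed
  obtain F where F: "F \<subseteq> nullI" "{0..1} \<subseteq> \<Union>F" "F \<approx> (UNIV::'i set)"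
    using assms(3) unfolding card_is_covN_def by blast
  obtain Nf where Nf: "bij_betw Nf (UNIV::'i set) F"
    using eqpoll_sym[OF F(3)] unfolding eqpoll_def by blast
  define A where "A = (\<lambda>a. \<Union> (Nf ` {b. (b,a) \<in> r}))"
  have Anull: "A a \<in> null_sets lebesgue" for a
  proof -
    have sub: "Nf ` {b. (b,a) \<in> r} \<subseteq> nullI" using Nf F(1) by (auto simp: bij_betw_def)
    have "\<Union> (Nf ` {b. (b,a) \<in> r}) \<in> nullI"
    proof (rule ccontr)
      assume "\<Union> (Nf ` {b. (b,a) \<in> r}) \<notin> nullI"
      hence "(UNIV::'i set) \<lesssim> Nf ` {b. (b,a) \<in> r}"
        using assms(2) sub unfolding card_is_addN_def by blast
      also have "Nf ` {b. (b,a) \<in> r} \<lesssim> {b. (b,a) \<in> r}" by (rule image_lepoll)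
      finally show False using under_not_big[OF co inf] by blast
    qed
    thus ?thesis unfolding A_def nullI_def by blast
  qed
  have cover: "\<exists>b. \<forall>a. (b,a) \<in> r \<longrightarrow> t \<in> A a" if t: "t \<in> {0..1}" for t
  proof -
    obtain S where S: "S \<in> F" "t \<in> S" using F(2) t by blast
    then obtain b where "Nf b = S" using Nf by (auto simp: bij_betw_def)
    thus ?thesis using S unfolding A_def by blast
  qed
  interpret constr r phi A
    by unfold_locales (use cof Anull cover in blast)+
  show ?thesis using alg .
qed



end
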